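(* Identify the vertices of every ordered forest with their preorder traversal labels. Then: (a) For any ordered forest, the labels of a vertex together with all its descendants form a contiguous interval of integers. (b) Let $p\in(0,1]$, $m\in[n]$ and $F\in\mathcal{F}_{\mathrm{ord}}(n)$; let $F\langle m,n\rangle$ be the induced subgraph on the vertices with labels in $[m,n]$, an ordered forest with the inherited orderings, and let $G\in\mathcal{F}_{\mathrm{ord}}(n-m+1)$ be isomorphic to it. For any $G'\in\mathcal{F}_{\mathrm{ord}}(n-m+1)$, the probability that a random Ungar move applied to $F$ produces a forest $F'$ with $F'\langle m,n\rangle\cong G'$ equals the probability that a random Ungar move applied to $G$ produces $G'$. (c) Start from $\hat 1$ (the path on $n$ vertices in which each vertex $i<n$ has unique child $i+1$) and apply a sequence of moves, where at step $t=1,2,\dots$ a set $S_t\subseteq[n]$ of vertices is selected and the selected vertices are operated on in increasing order of label. For each vertex $i$ let $h_i$ be the smallest $t$ with $i\in S_t$. Let $k<l$ be vertices with $h_k>h_l$ and $h_l\ge h_i$ for all $i\in[k+1,l-1]$. Then after $h_l$ steps, $l$ is a child of $k$.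
   Context: An ordered forest is a finite forest of rooted trees with children of each vertex and the trees linearly ordered left to right; $\mathcal{F}_{\mathrm{ord}}(n)$ is the set of such forests on $n$ vertices up to isomorphism. Preorder traversal labels vertices $1,\dots,n$: trees left to right, each vertex before its subtrees, subtrees left to right. Operating on a vertex $v$: if $v$ is a leaf nothing changes; otherwise the rightmost child $v'$ of $v$ (with its subtree) is detached and attached to the parent $w$ of $v$ immediately right of $v$, or, if $v$ is a root, becomes a new tree immediately to the right of the tree of $v$; labels are preserved. A random Ungar move with parameter $p$ on a forest $F$ selects each vertex independently with probability $p$ and operates on the selected vertices in increasing order of label (this is the Ungarian Markov chain on the Tamari lattice realized on $\mathcal{F}_{\mathrm{ord}}(n)$). *)

theory Defs
  imports Complex_Main
begin

text \<open>Encoding of ordered forests on n vertices (up to isomorphism), with vertices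
identified with their preorder labels 1..n.  A forest is encoded by its parent
function P :: nat => nat, where P v = 0 means that v is a root, and P v = 0 for
every v outside 1..n.  Children of a vertex (and the roots) are ordered left to
right by increasing label.  The encoding P of an ordered forest is valid iff
every parent has a smaller label and the labelling is the preorder one, i.e. the
parent of v+1 is v itself, an ancestor of v, or 0 (v+1 is a root).\<close>

definition ford :: "nat \<Rightarrow> (nat \<Rightarrow> nat) set" where
  "ford n = {P. (\<forall>v. v \<notin> {1..n} \<longrightarrow> P v = 0)
              \<and> (\<forall>v\<in>{1..n}. P v < v)
              \<and> (\<forall>v. 1 \<le> v \<and> v < n \<longrightarrow> (\<exists>j. (P ^^ j) v = P (Suc v)))}"

text \<open>Operating on vertex v: the rightmost (largest label) child v' of v gets the
parent of v (0 if v is a root); it is then the sibling immediately right of v.\<close>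

definition children :: "nat \<Rightarrow> (nat \<Rightarrow> nat) \<Rightarrow> nat \<Rightarrow> nat set" where
  "children n P v = {u\<in>{1..n}. P u = v}"

definition operate :: "nat \<Rightarrow> nat \<Rightarrow> (nat \<Rightarrow> nat) \<Rightarrow> (nat \<Rightarrow> nat)" where
  "operate n v P = (if v \<notin> {1..n} \<or> children n P v = {} then P
                    else P(Max (children n P v) := P v))"

definition ungar_apply :: "nat \<Rightarrow> nat set \<Rightarrow> (nat \<Rightarrow> nat) \<Rightarrow> (nat \<Rightarrow> nat)" where
  "ungar_apply n S P = fold (operate n) (sorted_list_of_set S) P"

definition ungar_prob :: "nat \<Rightarrow> real \<Rightarrow> (nat \<Rightarrow> nat) \<Rightarrow> ((nat \<Rightarrow> nat) \<Rightarrow> bool) \<Rightarrow> real" where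
  "ungar_prob n p F Q =
     (\<Sum>S\<in>Pow {1..n}. p ^ card S * (1 - p) ^ (n - card S) *
                      (if Q (ungar_apply n S F) then 1 else 0))"

text \<open>Sibling/root order is inherited, i.e. again by label.\<close>

definition induced :: "(nat \<Rightarrow> nat) \<Rightarrow> nat set \<Rightarrow> (nat \<Rightarrow> nat)" where
  "induced P V = (\<lambda>v. if v \<in> V \<and> P v \<in> V then P v else 0)"

definition of_iso :: "nat set \<Rightarrow> (nat \<Rightarrow> nat) \<Rightarrow> nat set \<Rightarrow> (nat \<Rightarrow> nat) \<Rightarrow> (nat \<Rightarrow> nat) \<Rightarrow> bool" where
  "of_iso V par W par' \<phi> \<longleftrightarrow>
     bij_betw \<phi> V W \<and>
     (\<forall>v\<in>V. par' (\<phi> v) = (if par v = 0 then 0 else \<phi> (par v))) \<and>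
     (\<forall>u\<in>V. \<forall>v\<in>V. par u = par v \<and> u < v \<longrightarrow> \<phi> u < \<phi> v)"

definition hat1 :: "nat \<Rightarrow> (nat \<Rightarrow> nat)" where
  "hat1 n = (\<lambda>v. if v \<in> {2..n} then v - 1 else 0)"

primrec run :: "nat \<Rightarrow> (nat \<Rightarrow> nat set) \<Rightarrow> nat \<Rightarrow> (nat \<Rightarrow> nat)" where
  "run n S 0 = hat1 n"
| "run n S (Suc t) = ungar_apply n (S (Suc t)) (run n S t)"

definition hit :: "(nat \<Rightarrow> nat set) \<Rightarrow> nat \<Rightarrow> nat" where
  "hit S i = (LEAST t. 1 \<le> t \<and> i \<in> S t)"

end

theory Submission
  imports Defs
begin


definition basic :: "nat \<Rightarrow> (nat \<Rightarrow> nat) \<Rightarrow> bool" where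
  "basic N P \<longleftrightarrow> (\<forall>v. v \<notin> {1..N} \<longrightarrow> P v = 0) \<and> (\<forall>v\<in>{1..N}. P v < v)"

definition anc :: "(nat \<Rightarrow> nat) \<Rightarrow> nat \<Rightarrow> nat \<Rightarrow> bool" where
  "anc P u a \<longleftrightarrow> (\<exists>j. (P ^^ j) u = a)"

definition condC :: "nat \<Rightarrow> (nat \<Rightarrow> nat) \<Rightarrow> bool" where
  "condC N P \<longleftrightarrow> (\<forall>v\<in>{1..N}. \<forall>u. P v < u \<and> u < v \<longrightarrow> anc P u (P v))"

lemma basic_le1: "basic N P \<Longrightarrow> P x \<le> x - 1"
  unfolding basic_def by (cases "x \<in> {1..N}") fastforce+

lemma basic_le: "basic N P \<Longrightarrow> P x \<le> x"
  using basic_le1[of N P x] by simp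

lemma basic_pow_le1: "basic N P \<Longrightarrow> (P ^^ j) u \<le> u - j"
proof (induction j)
  case 0 then show ?case by simp
next
  case (Suc j)
  have "(P ^^ Suc j) u = P ((P ^^ j) u)" by simp
  also have "\<dots> \<le> (P ^^ j) u - 1" using basic_le1[OF Suc.prems] .
  finally show ?case using Suc by simp
qed

lemma basic_pow_le: "basic N P \<Longrightarrow> (P ^^ j) u \<le> u"
  using basic_pow_le1[of N P j u] by simp

lemma anc_refl[simp]: "anc P u u"
  unfolding anc_def by (rule exI[of _ 0]) simp

lemma anc_parent[simp]: "anc P u (P u)"
  unfolding anc_def by (rule exI[of _ 1]) simp

lemma anc_step: "anc P (P u) a \<Longrightarrow> anc P u a"
  unfolding anc_def by (metis funpow_Suc_right o_apply)

lemma anc_trans: "anc P u a \<Longrightarrow> anc P a b \<Longrightarrow> anc P u b"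
  unfolding anc_def by (metis funpow_add o_apply)

lemma anc_le: "basic N P \<Longrightarrow> anc P u a \<Longrightarrow> a \<le> u"
  unfolding anc_def using basic_pow_le by blast

lemma anc_0: "basic N P \<Longrightarrow> anc P u 0"
  unfolding anc_def using basic_pow_le1[of N P u u] by (intro exI[of _ u]) simp

lemma anc_cases: "anc P u a \<Longrightarrow> u = a \<or> anc P (P u) a"
  unfolding anc_def by (metis funpow_0 funpow_Suc_right o_apply old.nat.exhaust)

lemma anc_child: "anc P u a \<Longrightarrow> u \<noteq> a \<Longrightarrow> \<exists>u'. anc P u u' \<and> P u' = a"
  unfolding anc_def by (metis funpow.simps(2) o_apply funpow_0 old.nat.exhaust)

lemma anc_total: "anc P w a \<Longrightarrow> anc P w c \<Longrightarrow> anc P a c \<or> anc P c a"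
proof -
  assume "anc P w a" "anc P w c"
  then obtain i j where i: "(P^^i) w = a" and j: "(P^^j) w = c" unfolding anc_def by blast
  show ?thesis
  proof (cases "i \<le> j")
    case True
    then have "(P^^(j - i)) ((P^^i) w) = c" using j by (metis funpow_add le_add_diff_inverse2 o_apply)
    then show ?thesis using i unfolding anc_def by blast
  next
    case False
    then have "(P^^(i - j)) ((P^^j) w) = a" using i by (metis funpow_add le_add_diff_inverse2 o_apply nat_le_linear)
    then show ?thesis using j unfolding anc_def by blast
  qed
qed

lemma ford_basic: "P \<in> ford N \<Longrightarrow> basic N P"
  unfolding ford_def basic_def by blast

lemma ford_step: "P \<in> ford N \<Longrightarrow> 1 \<le> v \<Longrightarrow> v < N \<Longrightarrow> anc P v (P (Suc v))"
  unfolding ford_def anc_def by blast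

lemma convex:
  assumes F: "P \<in> ford N" and a: "1 \<le> a" and ua: "anc P u a" and uN: "u \<le> N"
    and aw: "a \<le> w" and wu: "w \<le> u"
  shows "anc P w a"
proof -
  have "a \<le> w \<longrightarrow> anc P w a"
    using wu
  proof (induction rule: inc_induct)
    case base then show ?case using ua by simp
  next
    case (step x)
    show ?case
    proof
      assume ax: "a \<le> x"
      have "anc P (Suc x) a" using step ax by simp
      then have "anc P (P (Suc x)) a" using anc_cases ax by fastforce
      moreover have "anc P x (P (Suc x))" using ford_step[OF F] ax a step(2) uN by simp
      ultimately show "anc P x a" using anc_trans by blast
    qed
  qed
  then show ?thesis using aw by simp
qed

lemma ford_C: "P \<in> ford N \<Longrightarrow> condC N P"
  unfolding condC_def
proof (intro ballI allI impI)
  fix v u assume F: "P \<in> ford N" and v: "v \<in> {1..N}" and u: "P v < u \<and> u < v"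
  have B: "basic N P" using ford_basic[OF F] .
  show "anc P u (P v)"
  proof (cases "P v = 0")
    case True then show ?thesis using anc_0[OF B] by simp
  next
    case False
    then show ?thesis using convex[OF F, of "P v" v u] v u by simp
  qed
qed

lemma C_ford: "basic N P \<Longrightarrow> condC N P \<Longrightarrow> P \<in> ford N"
  unfolding ford_def mem_Collect_eq
proof (intro conjI allI impI)
  assume B: "basic N P" and C: "condC N P"
  show "\<And>v. v \<notin> {1..N} \<Longrightarrow> P v = 0" using B unfolding basic_def by blast
  show "\<forall>v\<in>{1..N}. P v < v" using B unfolding basic_def by blast
  fix v assume v: "1 \<le> v \<and> v < N"
  have lt: "P (Suc v) < Suc v" using B v unfolding basic_def by simp
  show "\<exists>j. (P ^^ j) v = P (Suc v)"
  proof (cases "P (Suc v) = v")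
    case True then show ?thesis by (intro exI[of _ 0]) simp
  next
    case False
    then have "anc P v (P (Suc v))" using C v lt unfolding condC_def by simp
    then show ?thesis unfolding anc_def .
  qed
qed



lemma children_fin: "finite (children N P v)"
  unfolding children_def by simp

lemma max_child:
  assumes "children N P v \<noteq> {}"
  shows "Max (children N P v) \<in> {1..N}" "P (Max (children N P v)) = v"
    "\<And>x. x \<in> {1..N} \<Longrightarrow> P x = v \<Longrightarrow> x \<le> Max (children N P v)"
proof -
  have "Max (children N P v) \<in> children N P v" using Max_in[OF children_fin assms] .
  then show "Max (children N P v) \<in> {1..N}" "P (Max (children N P v)) = v"
    unfolding children_def by auto
  fix x assume "x \<in> {1..N}" "P x = v"
  then have "x \<in> children N P v" unfolding children_def by simp
  then show "x \<le> Max (children N P v)" using Max_ge[OF children_fin] by blast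
qed

lemma pow_upd_below:
  assumes B: "basic N P" and u: "u < c"
  shows "((P(c := y)) ^^ j) u = (P ^^ j) u"
proof (induction j)
  case 0 then show ?case by simp
next
  case (Suc j)
  have "(P ^^ j) u \<le> u" using basic_pow_le[OF B] .
  then have "(P ^^ j) u \<noteq> c" using u by simp
  then show ?case using Suc by simp
qed

lemma anc_upd_below: "basic N P \<Longrightarrow> u < c \<Longrightarrow> anc (P(c := y)) u a \<longleftrightarrow> anc P u a"
  unfolding anc_def using pow_upd_below by presburger

lemma operate_ford:
  assumes F: "P \<in> ford N"
  shows "operate N v P \<in> ford N"
proof (cases "v \<notin> {1..N} \<or> children N P v = {}")
  case True then show ?thesis using F unfolding operate_def by simp
next
  case False
  then have v: "v \<in> {1..N}" and ne: "children N P v \<noteq> {}" by auto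
  define c where "c = Max (children N P v)"
  have c: "c \<in> {1..N}" "P c = v" "\<And>x. x \<in> {1..N} \<Longrightarrow> P x = v \<Longrightarrow> x \<le> c"
    using max_child[OF ne] unfolding c_def by auto
  have B: "basic N P" using ford_basic[OF F] .
  have C: "condC N P" using ford_C[OF F] .
  define P' where "P' = P(c := P v)"
  have op: "operate N v P = P'" unfolding operate_def P'_def c_def using False by simp
  have vc: "v < c" using B c unfolding basic_def by auto
  have Pv: "P v < v" using B v unfolding basic_def by auto
  have B': "basic N P'" using B c vc Pv unfolding basic_def P'_def by auto
  have Y: "anc P' u a" if ua: "anc P u a" and av: "a \<noteq> v" for u a
  proof -
    obtain j where "(P ^^ j) u = a" using ua unfolding anc_def by blast
    then show ?thesis
    proof (induction j arbitrary: u)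
      case 0 then show ?case by simp
    next
      case (Suc j)
      then have j: "(P ^^ j) (P u) = a" by (metis funpow_Suc_right o_apply)
      show ?case
      proof (cases "u = c")
        case True
        then have "anc P v a" using j c unfolding anc_def by auto
        then have "anc P (P v) a" using anc_cases av by blast
        then have "anc P' (P v) a" unfolding P'_def using anc_upd_below[OF B] Pv vc by simp
        then have "anc P' (P' c) a" unfolding P'_def by simp
        then show ?thesis using True anc_step by blast
      next
        case False
        have "anc P' (P u) a" using Suc.IH[OF j] .
        then have "anc P' (P' u) a" unfolding P'_def using False by simp
        then show ?thesis using anc_step by blast
      qed
    qed
  qed
  have C': "condC N P'"
    unfolding condC_def
  proof (intro ballI allI impI)
    fix x u assume x: "x \<in> {1..N}" and u: "P' x < u \<and> u < x"
    show "anc P' u (P' x)"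
    proof (cases "x = c")
      case True
      then have u2: "P v < u" "u < c" using u unfolding P'_def by auto
      have "anc P u (P v)"
      proof (cases "u < v")
        case True then show ?thesis using C v u2 unfolding condC_def by blast
      next
        case False
        show ?thesis
        proof (cases "u = v")
          case True then show ?thesis by simp
        next
          case False
          then have "v < u" using \<open>\<not> u < v\<close> by simp
          then have "anc P u v" using C c u2 unfolding condC_def by metis
          then show ?thesis using anc_trans anc_parent by blast
        qed
      qed
      then show ?thesis using True anc_upd_below[OF B u2(2)] unfolding P'_def by simp
    next
      case False
      then have Px: "P' x = P x" unfolding P'_def by simp
      have a: "anc P u (P x)" using C x u Px unfolding condC_def by simp
      show ?thesis
      proof (cases "P x = v")
        case True
        then have "x < c" using c(3)[OF x] False by fastforce
        then show ?thesis using a anc_upd_below[OF B, of u c] u Px unfolding P'_def by simp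
      next
        case False
        then show ?thesis using Y[OF a] Px by simp
      qed
    qed
  qed
  show ?thesis using C_ford[OF B' C'] op by simp
qed

lemma fold_operate_ford: "P \<in> ford N \<Longrightarrow> fold (operate N) xs P \<in> ford N"
  by (induction xs arbitrary: P) (auto simp: operate_ford)

lemma ungar_ford: "P \<in> ford N \<Longrightarrow> ungar_apply N S P \<in> ford N"
  unfolding ungar_apply_def by (rule fold_operate_ford)

lemma part_a:
  assumes F: "F \<in> ford n" and v: "v \<in> {1..n}"
  shows "\<exists>b. {u\<in>{1..n}. \<exists>j. (F ^^ j) u = v} = {v..b}"
proof -
  define D where "D = {u\<in>{1..n}. \<exists>j. (F ^^ j) u = v}"
  have B: "basic n F" using ford_basic[OF F] .
  have fin: "finite D" unfolding D_def by simp
  have vD: "v \<in> D" unfolding D_def using v by (auto intro: exI[of _ 0])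
  have "D = {v..Max D}"
  proof
    show "D \<subseteq> {v..Max D}"
    proof
      fix u assume u: "u \<in> D"
      then have "anc F u v" unfolding D_def anc_def by blast
      then have "v \<le> u" using anc_le[OF B] by blast
      then show "u \<in> {v..Max D}" using Max_ge[OF fin u] by simp
    qed
    show "{v..Max D} \<subseteq> D"
    proof
      fix w assume w: "w \<in> {v..Max D}"
      have MD: "Max D \<in> D" using Max_in[OF fin] vD by blast
      then have "anc F (Max D) v" "Max D \<le> n" unfolding D_def anc_def by auto
      then have "anc F w v" using convex[OF F, of v "Max D" w] v w by simp
      then show "w \<in> D" unfolding D_def anc_def using w v \<open>Max D \<le> n\<close> by auto
    qed
  qed
  then show ?thesis unfolding D_def by blast
qed



definition invc :: "nat \<Rightarrow> (nat \<Rightarrow> nat) \<Rightarrow> nat set \<Rightarrow> bool" where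
  "invc N P Ops \<longleftrightarrow> basic N P \<and> 0 \<notin> Ops \<and>
     (\<forall>c\<in>{1..N}. \<forall>j. P c < j \<and> j < c \<longrightarrow> j \<in> Ops) \<and>
     (\<forall>c\<in>{1..N}. c \<notin> Ops \<longrightarrow> P c \<notin> Ops)"

lemma inv_operate:
  assumes I: "invc N P Ops" and v: "v \<in> {1..N}"
  shows "invc N (operate N v P) (insert v Ops)"
proof (cases "children N P v = {}")
  case True
  then have op: "operate N v P = P" unfolding operate_def by simp
  have nc: "\<And>x. x \<in> {1..N} \<Longrightarrow> P x \<noteq> v" using True unfolding children_def by auto
  have I0: "basic N P" "0 \<notin> Ops" using I unfolding invc_def by auto
  have I1: "\<forall>c\<in>{1..N}. \<forall>j. P c < j \<and> j < c \<longrightarrow> j \<in> Ops" using I unfolding invc_def by simp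
  have I2: "\<forall>c\<in>{1..N}. c \<notin> Ops \<longrightarrow> P c \<notin> Ops" using I unfolding invc_def by simp
  have "0 \<notin> insert v Ops" using I0 v by auto
  moreover have "\<forall>c\<in>{1..N}. \<forall>j. P c < j \<and> j < c \<longrightarrow> j \<in> insert v Ops" using I1 by blast
  moreover have "\<forall>c\<in>{1..N}. c \<notin> insert v Ops \<longrightarrow> P c \<notin> insert v Ops" using I2 nc by blast
  ultimately show ?thesis unfolding op invc_def using I0 by blast
next
  case False
  define c where "c = Max (children N P v)"
  have c: "c \<in> {1..N}" "P c = v" "\<And>x. x \<in> {1..N} \<Longrightarrow> P x = v \<Longrightarrow> x \<le> c"
    using max_child[OF False] unfolding c_def by auto
  have op: "operate N v P = P(c := P v)" unfolding operate_def c_def using False v by simp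
  have B: "basic N P" using I unfolding invc_def by simp
  have vc: "v < c" using B c unfolding basic_def by auto
  have Pv: "P v < v" using B v unfolding basic_def by auto
  have B': "basic N (P(c := P v))" using B c vc Pv unfolding basic_def by auto
  have I1: "\<forall>c\<in>{1..N}. \<forall>j. P c < j \<and> j < c \<longrightarrow> j \<in> Ops" using I unfolding invc_def by simp
  have I2: "\<forall>c\<in>{1..N}. c \<notin> Ops \<longrightarrow> P c \<notin> Ops" using I unfolding invc_def by simp
  have z: "0 \<notin> insert v Ops" using I v unfolding invc_def by auto
  have J1: "\<forall>x\<in>{1..N}. \<forall>j. (P(c := P v)) x < j \<and> j < x \<longrightarrow> j \<in> insert v Ops"
  proof (intro ballI allI impI)
    fix x j assume x: "x \<in> {1..N}" and j: "(P(c := P v)) x < j \<and> j < x"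
    show "j \<in> insert v Ops"
    proof (cases "x = c")
      case True
      then have j2: "P v < j" "j < c" using j by auto
      consider "j < v" | "j = v" | "v < j" by linarith
      then show ?thesis
      proof cases
        case 1 then show ?thesis using I1 v j2 by blast
      next
        case 2 then show ?thesis by simp
      next
        case 3
        have "\<forall>j. P c < j \<and> j < c \<longrightarrow> j \<in> Ops" using I1 c(1) by blast
        then show ?thesis using 3 c(2) j2 by blast
      qed
    next
      case False
      then show ?thesis using I1 x j by auto
    qed
  qed
  have J2: "\<forall>x\<in>{1..N}. x \<notin> insert v Ops \<longrightarrow> (P(c := P v)) x \<notin> insert v Ops"
  proof (intro ballI impI)
    fix x assume x: "x \<in> {1..N}" and xO: "x \<notin> insert v Ops"
    show "(P(c := P v)) x \<notin> insert v Ops"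
    proof (cases "x = c")
      case True
      have "v \<notin> Ops" using I2 c True xO by fastforce
      then have "P v \<notin> Ops" using I2 v by blast
      then show ?thesis using True Pv by simp
    next
      case False
      have "P x \<noteq> v"
      proof
        assume "P x = v"
        then have "x \<le> c" using c(3)[OF x] by blast
        then have xc: "x < c" using False by simp
        have "P x < x" using B x unfolding basic_def by blast
        then have vx: "v < x" using \<open>P x = v\<close> by simp
        have "\<forall>j. P c < j \<and> j < c \<longrightarrow> j \<in> Ops" using I1 c(1) by blast
        then have "x \<in> Ops" using vx xc c(2) by blast
        then show False using xO by simp
      qed
      then show ?thesis using False I2 x xO by simp
    qed
  qed
  show ?thesis unfolding op invc_def using B' z J1 J2 by blast
qed

lemma inv_fold: "invc N P Ops \<Longrightarrow> set xs \<subseteq> {1..N} \<Longrightarrow> invc N (fold (operate N) xs P) (Ops \<union> set xs)"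
proof (induction xs arbitrary: P Ops)
  case Nil then show ?case by simp
next
  case (Cons x xs)
  have i1: "invc N (operate N x P) (insert x Ops)" using inv_operate Cons.prems by simp
  have A: "set xs \<subseteq> {1..N}" using Cons.prems(2) by simp
  have "invc N (fold (operate N) xs (operate N x P)) (insert x Ops \<union> set xs)"
    by (rule Cons.IH[OF i1 A])
  moreover have "insert x Ops \<union> set xs = Ops \<union> set (x # xs)" by auto
  ultimately show ?case by simp
qed

lemma operate_keep: "v \<noteq> P x \<Longrightarrow> operate N v P x = P x"
proof (cases "v \<notin> {1..N} \<or> children N P v = {}")
  case True then show ?thesis unfolding operate_def by simp
next
  case False
  assume vx: "v \<noteq> P x"
  have "P (Max (children N P v)) = v" using max_child(2) False by blast
  then have "x \<noteq> Max (children N P v)" using vx by auto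
  then show ?thesis unfolding operate_def using False by simp
qed

lemma fold_keep: "\<forall>v\<in>set xs. v \<noteq> P x \<Longrightarrow> fold (operate N) xs P x = P x"
proof (induction xs arbitrary: P)
  case Nil then show ?case by simp
next
  case (Cons y xs)
  have "operate N y P x = P x" using operate_keep Cons.prems by simp
  then show ?case using Cons by simp
qed

lemma inv_hat1: "invc n (hat1 n) {}"
  unfolding invc_def basic_def hat1_def by auto

lemma inv_run:
  assumes S: "\<forall>t\<ge>1. S t \<subseteq> {1..n}"
  shows "invc n (run n S t) (\<Union>s\<in>{1..t}. S s)"
proof (induction t)
  case 0 then show ?case using inv_hat1 by simp
next
  case (Suc t)
  have sub: "S (Suc t) \<subseteq> {1..n}" using S by simp
  then have fin: "finite (S (Suc t))" using finite_subset by blast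
  have st: "set (sorted_list_of_set (S (Suc t))) = S (Suc t)" using fin by simp
  have "invc n (fold (operate n) (sorted_list_of_set (S (Suc t))) (run n S t))
          ((\<Union>s\<in>{1..t}. S s) \<union> set (sorted_list_of_set (S (Suc t))))"
    by (rule inv_fold[OF Suc]) (simp only: st sub)
  moreover have "(\<Union>s\<in>{1..Suc t}. S s) = (\<Union>s\<in>{1..t}. S s) \<union> S (Suc t)"
    by (simp add: atLeastAtMostSuc_conv Un_commute)
  moreover have "set (sorted_list_of_set (S (Suc t))) = S (Suc t)" using fin by simp
  ultimately show ?case unfolding ungar_apply_def run.simps by simp
qed

lemma sorted_split: "sorted xs \<Longrightarrow> xs = filter (\<lambda>x. x < (l::nat)) xs @ filter (\<lambda>x. \<not> x < l) xs"
proof (induction xs)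
  case Nil then show ?case by simp
next
  case (Cons a xs)
  show ?case
  proof (cases "a < l")
    case True then show ?thesis using Cons by simp
  next
    case False
    then have "\<forall>x\<in>set xs. \<not> x < l" using Cons.prems by auto
    then show ?thesis using False by (simp add: filter_empty_conv)
  qed
qed

lemma hit_props:
  assumes "\<exists>t\<ge>1. i \<in> S t"
  shows "1 \<le> hit S i" "i \<in> S (hit S i)" "\<And>t. 1 \<le> t \<Longrightarrow> i \<in> S t \<Longrightarrow> hit S i \<le> t"
proof -
  have "1 \<le> hit S i \<and> i \<in> S (hit S i)" unfolding hit_def using assms by (metis (mono_tags, lifting) LeastI)
  then show "1 \<le> hit S i" "i \<in> S (hit S i)" by auto
  fix t assume "1 \<le> t" "i \<in> S t"
  then show "hit S i \<le> t" unfolding hit_def by (simp add: Least_le)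
qed

lemma part_c:
  assumes S: "\<forall>t\<ge>1. S t \<subseteq> {1..n}" and k: "k \<in> {1..n}" and l: "l \<in> {1..n}" and kl: "k < l"
    and hits: "\<forall>i\<in>{k..l}. \<exists>t\<ge>1. i \<in> S t"
    and hlk: "hit S l < hit S k"
    and mid: "\<forall>i\<in>{k+1..l-1}. hit S i \<le> hit S l"
  shows "run n S (hit S l) l = k"
proof -
  define h where "h = hit S l"
  have hl: "1 \<le> h" "l \<in> S h" "\<And>t. 1 \<le> t \<Longrightarrow> l \<in> S t \<Longrightarrow> h \<le> t"
    using hit_props[of l S] hits kl unfolding h_def by auto
  have hk: "\<And>t. 1 \<le> t \<Longrightarrow> k \<in> S t \<Longrightarrow> hit S k \<le> t"
    using hit_props[of k S] hits kl by auto
  obtain h0 where h0: "h = Suc h0" using hl(1) by (cases h) auto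
  have subh: "S h \<subseteq> {1..n}" using S hl by simp
  then have fin: "finite (S h)" using finite_subset by blast
  define xs where "xs = sorted_list_of_set (S h)"
  define xs1 where "xs1 = filter (\<lambda>x. x < l) xs"
  define xs2 where "xs2 = filter (\<lambda>x. \<not> x < l) xs"
  have sxs: "set xs = S h" unfolding xs_def using fin by simp
  have split: "xs = xs1 @ xs2" unfolding xs1_def xs2_def
    by (rule sorted_split) (simp add: xs_def)
  define O1 where "O1 = (\<Union>s\<in>{1..h0}. S s) \<union> set xs1"
  define Q1 where "Q1 = fold (operate n) xs1 (run n S h0)"
  have I: "invc n Q1 O1" unfolding Q1_def O1_def
    using inv_fold[OF inv_run[OF S, of h0], of xs1] sxs subh unfolding xs1_def by auto
  have r1: "run n S (Suc h0) = fold (operate n) (sorted_list_of_set (S (Suc h0))) (run n S h0)"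
    by (simp add: ungar_apply_def)
  have run_eq: "run n S h = fold (operate n) xs2 Q1"
    unfolding Q1_def using r1 split unfolding xs_def h0[symmetric] by (metis fold_append comp_apply)
  have lO: "l \<notin> O1"
  proof
    assume "l \<in> O1"
    then consider s where "s \<in> {1..h0}" "l \<in> S s" | "l \<in> set xs1" unfolding O1_def by blast
    then show False
    proof cases
      case 1 then show False using hl(3)[of s] h0 by auto
    next
      case 2 then show False unfolding xs1_def by simp
    qed
  qed
  have kS: "\<And>s. 1 \<le> s \<Longrightarrow> s \<le> h \<Longrightarrow> k \<notin> S s" using hk hlk unfolding h_def by fastforce
  have kO: "k \<notin> O1"
  proof
    assume "k \<in> O1"
    then consider s where "s \<in> {1..h0}" "k \<in> S s" | "k \<in> set xs1" unfolding O1_def by blast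
    then show False
    proof cases
      case 1 then show False using kS[of s] h0 by auto
    next
      case 2 then have "k \<in> S h" using sxs unfolding xs1_def by auto
      then show False using kS[of h] hl by auto
    qed
  qed
  have midO: "i \<in> O1" if i: "i \<in> {k+1..l-1}" for i
  proof -
    have ex: "\<exists>t\<ge>1. i \<in> S t" using hits i by auto
    have hi: "hit S i \<le> h" using mid i unfolding h_def by blast
    show ?thesis
    proof (cases "hit S i < h")
      case True
      then have "hit S i \<in> {1..h0}" using hit_props(1)[OF ex] h0 by auto
      then show ?thesis using hit_props(2)[OF ex] unfolding O1_def by blast
    next
      case False
      then have "i \<in> S h" using hi hit_props(2)[OF ex] by (metis le_neq_implies_less)
      then show ?thesis unfolding O1_def xs1_def using sxs i by auto
    qed
  qed
  have B: "basic n Q1" using I unfolding invc_def by simp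
  have lt: "Q1 l < l" using B l unfolding basic_def by simp
  have nO: "Q1 l \<notin> O1" using I l lO unfolding invc_def by blast
  have btw: "\<And>j. Q1 l < j \<Longrightarrow> j < l \<Longrightarrow> j \<in> O1" using I l unfolding invc_def by blast
  have Q1l: "Q1 l = k"
  proof -
    have "\<not> Q1 l < k" using btw[of k] kO kl by blast
    moreover have "\<not> k < Q1 l"
    proof
      assume "k < Q1 l"
      then have "Q1 l \<in> {k+1..l-1}" using lt by auto
      then show False using midO nO by blast
    qed
    ultimately show ?thesis by simp
  qed
  have "\<forall>v\<in>set xs2. v \<noteq> Q1 l" using Q1l kS[of h] hl sxs unfolding xs2_def by auto
  then have "fold (operate n) xs2 Q1 l = Q1 l" by (rule fold_keep)
  then show ?thesis using run_eq Q1l unfolding h_def by simp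
qed




definition R :: "nat \<Rightarrow> nat \<Rightarrow> (nat \<Rightarrow> nat) \<Rightarrow> (nat \<Rightarrow> nat)" where
  "R d N P = (\<lambda>x. if 1 \<le> x \<and> x \<le> N \<and> d < P (x + d) then P (x + d) - d else 0)"

lemma R_basic:
  assumes "basic (N + d) P" shows "basic N (R d N P)"
proof -
  have h: "\<And>v. v \<in> {1..N} \<Longrightarrow> P (v + d) < v + d" using assms unfolding basic_def by auto
  show ?thesis unfolding basic_def R_def using h by fastforce
qed

lemma R_pow:
  assumes B: "basic (N + d) P" and u: "u \<in> {1..N}"
  shows "d < (P ^^ j) (u + d) \<Longrightarrow> (R d N P ^^ j) u = (P ^^ j) (u + d) - d"
proof (induction j)
  case 0 then show ?case by simp
next
  case (Suc j)
  have le: "P ((P ^^ j) (u + d)) \<le> (P ^^ j) (u + d)" using basic_le[OF B] .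
  then have dj: "d < (P ^^ j) (u + d)" using Suc.prems by simp
  have "(P ^^ j) (u + d) \<le> u + d" using basic_pow_le[OF B] .
  then have w: "(P ^^ j) (u + d) - d \<in> {1..N}" using dj u by auto
  have "(R d N P ^^ Suc j) u = R d N P ((P ^^ j) (u + d) - d)" using Suc.IH[OF dj] by simp
  also have "\<dots> = P ((P ^^ j) (u + d)) - d" using w dj Suc.prems unfolding R_def by simp
  finally show ?case by simp
qed

lemma R_ford:
  assumes F: "P \<in> ford (N + d)"
  shows "R d N P \<in> ford N"
proof -
  have B: "basic (N + d) P" using ford_basic[OF F] .
  have BR: "basic N (R d N P)" using R_basic[OF B] .
  have C: "condC (N + d) P" using ford_C[OF F] .
  have "condC N (R d N P)" unfolding condC_def
  proof (intro ballI allI impI)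
    fix x u assume x: "x \<in> {1..N}" and u: "R d N P x < u \<and> u < x"
    show "anc (R d N P) u (R d N P x)"
    proof (cases "d < P (x + d)")
      case False
      then have "R d N P x = 0" unfolding R_def by simp
      then show ?thesis using anc_0[OF BR] by simp
    next
      case True
      then have Rx: "R d N P x = P (x + d) - d" unfolding R_def using x by simp
      have "P (x + d) < u + d" "u + d < x + d" using u Rx True by auto
      then have "anc P (u + d) (P (x + d))" using C x unfolding condC_def by simp
      then obtain j where j: "(P ^^ j) (u + d) = P (x + d)" unfolding anc_def by blast
      have "u \<in> {1..N}" using u x by auto
      then have "(R d N P ^^ j) u = P (x + d) - d" using R_pow[OF B, of u j] j True by simp
      then show ?thesis unfolding anc_def Rx by blast
    qed
  qed
  then show ?thesis using C_ford[OF BR] by simp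
qed

lemma R_op_low:
  assumes B: "basic (N + d) P" and v: "v \<le> d"
  shows "R d N (operate (N + d) v P) = R d N P"
proof (cases "v \<notin> {1..N + d} \<or> children (N + d) P v = {}")
  case True then show ?thesis unfolding operate_def by simp
next
  case False
  define c where "c = Max (children (N + d) P v)"
  have c: "P c = v" using max_child(2)[of "N + d" P v] False unfolding c_def by simp
  have op: "operate (N + d) v P = P(c := P v)" unfolding operate_def c_def using False by simp
  have Pv: "P v \<le> v" using basic_le[OF B] .
  show ?thesis unfolding op R_def
  proof (rule ext)
    fix x
    show "(if 1 \<le> x \<and> x \<le> N \<and> d < (P(c := P v)) (x + d) then (P(c := P v)) (x + d) - d else 0) =
          (if 1 \<le> x \<and> x \<le> N \<and> d < P (x + d) then P (x + d) - d else 0)"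
      using c Pv v by (cases "x + d = c") auto
  qed
qed

lemma R_op_high:
  assumes B: "basic (N + d) P" and v: "v \<in> {d+1..N + d}"
  shows "R d N (operate (N + d) v P) = operate N (v - d) (R d N P)"
proof -
  have v': "v - d \<in> {1..N}" using v by auto
  have ch: "children N (R d N P) (v - d) = (\<lambda>w. w - d) ` children (N + d) P v"
  proof
    show "children N (R d N P) (v - d) \<subseteq> (\<lambda>w. w - d) ` children (N + d) P v"
    proof
      fix u assume "u \<in> children N (R d N P) (v - d)"
      then have u: "u \<in> {1..N}" "R d N P u = v - d" unfolding children_def by auto
      then have "d < P (u + d)" "P (u + d) - d = v - d" using v' unfolding R_def by (auto split: if_splits)
      then have "P (u + d) = v" using v by auto
      then have "u + d \<in> children (N + d) P v" using u unfolding children_def by auto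
      then show "u \<in> (\<lambda>w. w - d) ` children (N + d) P v" by force
    qed
    show "(\<lambda>w. w - d) ` children (N + d) P v \<subseteq> children N (R d N P) (v - d)"
    proof
      fix u assume "u \<in> (\<lambda>w. w - d) ` children (N + d) P v"
      then obtain w where w: "w \<in> {1..N + d}" "P w = v" "u = w - d" unfolding children_def by auto
      have "P w < w" using B w unfolding basic_def by auto
      then have "d < w" using w v by auto
      then have "u \<in> {1..N}" "u + d = w" using w by auto
      then show "u \<in> children N (R d N P) (v - d)" unfolding children_def R_def using w v by auto
    qed
  qed
  show ?thesis
  proof (cases "children (N + d) P v = {}")
    case True
    then have "children N (R d N P) (v - d) = {}" using ch by simp
    then show ?thesis using True unfolding operate_def by simp
  next
    case False
    define c where "c = Max (children (N + d) P v)"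
    have c: "c \<in> {1..N+d}" "P c = v" using max_child[OF False] unfolding c_def by auto
    have op: "operate (N + d) v P = P(c := P v)" unfolding operate_def c_def using False v by simp
    have "Max (children N (R d N P) (v - d)) = c - d"
      unfolding ch c_def by (rule mono_Max_commute[symmetric]) (auto simp: mono_def children_fin False)
    moreover have ne: "children N (R d N P) (v - d) \<noteq> {}" using ch False by simp
    ultimately have op2: "operate N (v - d) (R d N P) = (R d N P)(c - d := R d N P (v - d))"
      unfolding operate_def using v' by simp
    have Pc: "P c < c" using B c unfolding basic_def by auto
    then have dc: "d < c" using c v by auto
    show ?thesis unfolding op op2
    proof (rule ext)
      fix x
      show "R d N (P(c := P v)) x = ((R d N P)(c - d := R d N P (v - d))) x"
      proof (cases "x = c - d")
        case True
        then have "x + d = c" using dc by simp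
        then show ?thesis using True v v' c dc unfolding R_def by auto
      next
        case False
        then have "x + d \<noteq> c" using dc by auto
        then show ?thesis using False unfolding R_def by simp
      qed
    qed
  qed
qed

lemma R_fold:
  assumes F: "P \<in> ford (N + d)" and xs: "set xs \<subseteq> {1..N + d}"
  shows "R d N (fold (operate (N + d)) xs P) =
         fold (operate N) (map (\<lambda>x. x - d) (filter (\<lambda>x. d < x) xs)) (R d N P)"
  using F xs
proof (induction xs arbitrary: P)
  case Nil then show ?case by simp
next
  case (Cons x xs)
  have F': "operate (N + d) x P \<in> ford (N + d)" using operate_ford[OF Cons.prems(1)] .
  have IH: "R d N (fold (operate (N + d)) xs (operate (N + d) x P)) =
         fold (operate N) (map (\<lambda>x. x - d) (filter (\<lambda>x. d < x) xs)) (R d N (operate (N + d) x P))"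
    using Cons.IH[OF F'] Cons.prems(2) by simp
  have B: "basic (N + d) P" using ford_basic[OF Cons.prems(1)] .
  show ?case
  proof (cases "d < x")
    case True
    have "R d N (operate (N + d) x P) = operate N (x - d) (R d N P)"
      using R_op_high[OF B] True Cons.prems(2) by simp
    then show ?thesis using IH True by simp
  next
    case False
    have "R d N (operate (N + d) x P) = R d N P"
      using R_op_low[OF B] False by simp
    then show ?thesis using IH False by simp
  qed
qed

lemma sorted_shift:
  fixes S :: "nat set" and d n :: nat
  assumes fin: "finite S"
  shows "sorted_list_of_set ((\<lambda>x. x - d) ` (S \<inter> {d+1..n})) =
         map (\<lambda>x. x - d) (filter (\<lambda>x. d < x) (sorted_list_of_set (S \<inter> {1..n})))"
proof -
  define xs where "xs = sorted_list_of_set (S \<inter> {1..n})"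
  have s: "sorted xs" "distinct xs" "set xs = S \<inter> {1..n}" unfolding xs_def using fin by auto
  have sf: "sorted (filter (\<lambda>x. d < x) xs)" using s(1) by (rule sorted_wrt_filter)
  have "sorted (map (\<lambda>x. x - d) (filter (\<lambda>x. d < x) xs))"
    unfolding sorted_map by (rule sorted_wrt_mono_rel[OF _ sf]) auto
  moreover have "distinct (map (\<lambda>x. x - d) (filter (\<lambda>x. d < x) xs))"
    using s(2) by (auto simp: distinct_map inj_on_def)
  moreover have "set (map (\<lambda>x. x - d) (filter (\<lambda>x. d < x) xs)) = (\<lambda>x. x - d) ` (S \<inter> {d+1..n})"
    using s(3) by auto
  ultimately show ?thesis unfolding xs_def
  proof -
    fix ys :: "nat list" and A :: "nat set"
    assume a: "sorted ys" "distinct ys" "set ys = A"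
    have "sorted_wrt (<) ys" using a(1,2) by (simp add: strict_sorted_iff)
    moreover have "length ys = card A" using distinct_card[OF a(2)] a(3) by simp
    moreover have "finite A" using a(3) by blast
    ultimately show "sorted_list_of_set A = ys" using sorted_list_of_set_unique a(3) by blast
  qed
qed



lemma anc_child':
  "anc P u a \<Longrightarrow> u \<noteq> a \<Longrightarrow> \<exists>u'. anc P u u' \<and> P u' = a \<and> u' \<noteq> a"
proof -
  assume "anc P u a" "u \<noteq> a"
  then obtain j where "(P ^^ j) u = a" unfolding anc_def by blast
  then show ?thesis using \<open>u \<noteq> a\<close>
  proof (induction j arbitrary: u)
    case 0 then show ?case by simp
  next
    case (Suc j)
    then have j: "(P ^^ j) (P u) = a" by (metis funpow_Suc_right o_apply)
    show ?case
    proof (cases "P u = a")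
      case True then show ?thesis using Suc.prems by (intro exI[of _ u]) simp
    next
      case False
      then obtain u' where "anc P (P u) u'" "P u' = a" "u' \<noteq> a" using Suc.IH[OF j] by blast
      then show ?thesis using anc_step by blast
    qed
  qed
qed

lemma iso_unique:
  assumes A: "A \<in> ford N" and B: "B \<in> ford N" and I: "of_iso {1..N} A {1..N} B \<phi>"
  shows "A = B"
proof -
  have I': "bij_betw \<phi> {1..N} {1..N} \<and>
     (\<forall>v\<in>{1..N}. B (\<phi> v) = (if A v = 0 then 0 else \<phi> (A v))) \<and>
     (\<forall>u\<in>{1..N}. \<forall>v\<in>{1..N}. A u = A v \<and> u < v \<longrightarrow> \<phi> u < \<phi> v)"
    using I unfolding of_iso_def .
  have bij: "bij_betw \<phi> {1..N} {1..N}" using I' by (rule conjunct1)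
  have par: "\<And>v. v \<in> {1..N} \<Longrightarrow> B (\<phi> v) = (if A v = 0 then 0 else \<phi> (A v))"
    using I' by blast
  have ord: "\<And>u v. u \<in> {1..N} \<Longrightarrow> v \<in> {1..N} \<Longrightarrow> A u = A v \<Longrightarrow> u < v \<Longrightarrow> \<phi> u < \<phi> v"
    using I' by blast
  have BA: "basic N A" using ford_basic[OF A] .
  have BB: "basic N B" using ford_basic[OF B] .
  have inj: "inj_on \<phi> {1..N}" using bij by (rule bij_betw_imp_inj_on)
  have img: "\<phi> ` {1..N} = {1..N}" using bij by (rule bij_betw_imp_surj_on)
  have Alt: "\<And>w. w \<in> {1..N} \<Longrightarrow> A w < w" using BA unfolding basic_def by blast
  have Blt: "\<And>w. w \<in> {1..N} \<Longrightarrow> B w < w" using BB unfolding basic_def by blast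
  have A0: "A 0 = 0" using BA unfolding basic_def by simp
  have B0: "B 0 = 0" using BB unfolding basic_def by simp
  have fixp: "v \<in> {1..N} \<Longrightarrow> \<phi> v = v" for v
  proof (induction v rule: less_induct)
    case (less v)
    note v = less.prems
    have IH: "\<And>w. w < v \<Longrightarrow> 1 \<le> w \<Longrightarrow> \<phi> w = w" using less.IH v by simp
    have low: "v \<le> \<phi> z" if z: "z \<in> {1..N}" "v \<le> z" for z
    proof (rule ccontr)
      assume "\<not> v \<le> \<phi> z"
      moreover have "\<phi> z \<in> {1..N}" using img z by blast
      ultimately have "\<phi> (\<phi> z) = \<phi> z" using IH by simp
      then have "\<phi> z = z" using inj_onD[OF inj _ \<open>\<phi> z \<in> {1..N}\<close> z(1)] by blast
      then show False using \<open>\<not> v \<le> \<phi> z\<close> z by simp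
    qed
    show "\<phi> v = v"
    proof (rule ccontr)
      assume ne: "\<phi> v \<noteq> v"
      obtain y where y: "y \<in> {1..N}" "\<phi> y = v" using img v by (metis imageE)
      have yv: "v < y"
      proof -
        have "\<not> y < v" using IH y ne by fastforce
        moreover have "y \<noteq> v" using y ne by auto
        ultimately show ?thesis by simp
      qed
      define x where "x = \<phi> v"
      have xv: "v < x" using low[OF v] ne unfolding x_def by simp
      have xN: "x \<in> {1..N}" using img v unfolding x_def by blast
      have agree: "B w = A w" if "w < v" for w
      proof (cases "w = 0")
        case True then show ?thesis using A0 B0 by simp
      next
        case False
        then have w: "w \<in> {1..N}" using that v by auto
        have "B w = B (\<phi> w)" using IH that False by simp
        also have "\<dots> = (if A w = 0 then 0 else \<phi> (A w))" using par[OF w] .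
        also have "\<dots> = A w" using IH Alt[OF w] that by auto
        finally show ?thesis .
      qed
      have pow_agree: "(B ^^ j) w = (A ^^ j) w" if "w < v" for j w
      proof (induction j)
        case 0 then show ?case by simp
      next
        case (Suc j)
        have "(A ^^ j) w \<le> w" using basic_pow_le[OF BA] .
        then show ?case using Suc agree that by simp
      qed
      have anc_agree: "anc B w a \<longleftrightarrow> anc A w a" if "w < v" for w a
        unfolding anc_def using pow_agree[OF that] by simp
      define a where "a = A v"
      define c where "c = A y"
      have av: "a < v" unfolding a_def using Alt[OF v] .
      have Bx: "B x = a"
      proof -
        have "B x = (if A v = 0 then 0 else \<phi> (A v))" unfolding x_def using par[OF v] .
        then show ?thesis unfolding a_def using IH av a_def by auto
      qed
      have cv: "c < v"
      proof (rule ccontr)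
        assume "\<not> c < v"
        then have "c \<noteq> 0" "c \<in> {1..N}" using v Alt[OF y(1)] y unfolding c_def by auto
        then have "B v = \<phi> c" using par[OF y(1)] y unfolding c_def by simp
        moreover have "v \<le> \<phi> c" using low \<open>c \<in> {1..N}\<close> \<open>\<not> c < v\<close> by simp
        ultimately show False using Blt[OF v] by simp
      qed
      have Bv: "B v = c"
      proof -
        have "B v = (if A y = 0 then 0 else \<phi> (A y))" using par[OF y(1)] y by simp
        then show ?thesis unfolding c_def using IH cv c_def by auto
      qed
      show False
      proof (cases "a = c")
        case True
        then have "A v = A y" unfolding a_def c_def by simp
        then have "\<phi> v < \<phi> y" using ord v y yv by blast
        then show False using xv y unfolding x_def by simp
      next
        case False
        have v2: "2 \<le> v"
        proof (rule ccontr)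
          assume "\<not> 2 \<le> v"
          then have "v = 1" using v by simp
          then show False using False av cv by simp
        qed
        have "anc A (v - 1) (A (Suc (v - 1)))" by (rule ford_step[OF A]) (use v v2 in auto)
        then have aa: "anc A (v - 1) a" using v2 unfolding a_def by simp
        have "anc B (v - 1) (B (Suc (v - 1)))" by (rule ford_step[OF B]) (use v v2 in auto)
        then have "anc B (v - 1) c" using v2 Bv by simp
        then have ac: "anc A (v - 1) c" using anc_agree v2 by simp
        from anc_total[OF aa ac] show False
        proof
          assume "anc A a c"
          then obtain a' where a': "anc A a a'" "A a' = c" "a' \<noteq> c" using anc_child' False by blast
          have "a' \<noteq> 0"
          proof
            assume "a' = 0"
            then have "c = 0" using a'(2) A0 by simp
            then show False using a'(3) \<open>a' = 0\<close> by simp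
          qed
          have a'a: "a' \<le> a" using anc_le[OF BA a'(1)] .
          then have a'N: "a' \<in> {1..N}" using \<open>a' \<noteq> 0\<close> av v by auto
          have "anc B a a'" using anc_agree av a' by simp
          then have "anc B x a'" using Bx anc_step by metis
          then have "anc B v a'" using convex[OF B, of a' x v] \<open>a' \<noteq> 0\<close> xN a'a av xv by simp
          moreover have "v \<noteq> a'" using a'a av by simp
          ultimately have "anc B c a'" using anc_cases Bv by metis
          then have "a' \<le> c" using anc_le[OF BB] by blast
          then show False using Alt[OF a'N] a' by simp
        next
          assume "anc A c a"
          then obtain c' where c': "anc A c c'" "A c' = a" "c' \<noteq> a" using anc_child' False by metis
          have "c' \<noteq> 0"
          proof
            assume "c' = 0"
            then have "a = 0" using c'(2) A0 by simp
            then show False using c'(3) \<open>c' = 0\<close> by simp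
          qed
          have c'c: "c' \<le> c" using anc_le[OF BA c'(1)] .
          then have c'N: "c' \<in> {1..N}" using \<open>c' \<noteq> 0\<close> cv v by auto
          have "anc A y c'" using c'(1) anc_step c_def by metis
          then have "anc A v c'" using convex[OF A, of c' y v] \<open>c' \<noteq> 0\<close> y c'c cv yv by simp
          moreover have "v \<noteq> c'" using c'c cv by simp
          ultimately have "anc A a c'" using anc_cases a_def by metis
          then have "c' \<le> a" using anc_le[OF BA] by blast
          then show False using Alt[OF c'N] c' by simp
        qed
      qed
    qed
  qed
  show "A = B"
  proof (rule ext)
    fix w
    show "A w = B w"
    proof (cases "w \<in> {1..N}")
      case True
      have "B w = B (\<phi> w)" using fixp True by simp
      also have "\<dots> = (if A w = 0 then 0 else \<phi> (A w))" using par[OF True] .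
      also have "\<dots> = A w" using fixp Alt[OF True] True by auto
      finally show ?thesis by simp
    next
      case False
      then show ?thesis using BA BB unfolding basic_def by simp
    qed
  qed
qed



lemma iso_shift1:
  assumes B: "basic (N + d) P"
  shows "of_iso {1..N} (R d N P) {Suc d..N + d} (induced P {Suc d..N + d}) (\<lambda>x. x + d)"
  unfolding of_iso_def
proof (intro conjI ballI impI)
  show "bij_betw (\<lambda>x. x + d) {1..N} {Suc d..N + d}"
    by (rule bij_betw_byWitness[where f' = "\<lambda>x. x - d"]) auto
next
  fix v assume v: "v \<in> {1..N}"
  have "P (v + d) < v + d" using B v unfolding basic_def by auto
  then show "induced P {Suc d..N + d} (v + d) = (if R d N P v = 0 then 0 else R d N P v + d)"
    using v unfolding induced_def R_def by auto
next
  fix u v assume "u \<in> {1..N}" "v \<in> {1..N}" "R d N P u = R d N P v \<and> u < v"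
  then show "u + d < v + d" by simp
qed

lemma iso_shift2:
  assumes B: "basic (N + d) P"
  shows "of_iso {Suc d..N + d} (induced P {Suc d..N + d}) {1..N} (R d N P) (\<lambda>x. x - d)"
  unfolding of_iso_def
proof (intro conjI ballI impI)
  show "bij_betw (\<lambda>x. x - d) {Suc d..N + d} {1..N}"
    by (rule bij_betw_byWitness[where f' = "\<lambda>x. x + d"]) auto
next
  fix v assume v: "v \<in> {Suc d..N + d}"
  have "P v < v" using B v unfolding basic_def by auto
  then show "R d N P (v - d) = (if induced P {Suc d..N + d} v = 0 then 0 else induced P {Suc d..N + d} v - d)"
    using v unfolding induced_def R_def by auto
next
  fix u v assume "u \<in> {Suc d..N + d}" "v \<in> {Suc d..N + d}"
    "induced P {Suc d..N + d} u = induced P {Suc d..N + d} v \<and> u < v"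
  then show "u - d < v - d" by auto
qed

lemma iso_comp:
  assumes I1: "of_iso V A W B \<phi>" and I2: "of_iso W B X C \<psi>" and W0: "0 \<notin> W"
    and AV: "\<forall>v\<in>V. A v \<noteq> 0 \<longrightarrow> A v \<in> V"
  shows "of_iso V A X C (\<psi> \<circ> \<phi>)"
proof -
  have b1: "bij_betw \<phi> V W"
    and p1: "\<And>v. v \<in> V \<Longrightarrow> B (\<phi> v) = (if A v = 0 then 0 else \<phi> (A v))"
    and o1: "\<And>u v. u \<in> V \<Longrightarrow> v \<in> V \<Longrightarrow> A u = A v \<Longrightarrow> u < v \<Longrightarrow> \<phi> u < \<phi> v"
    using I1 unfolding of_iso_def by blast+
  have b2: "bij_betw \<psi> W X"
    and p2: "\<And>v. v \<in> W \<Longrightarrow> C (\<psi> v) = (if B v = 0 then 0 else \<psi> (B v))"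
    and o2: "\<And>u v. u \<in> W \<Longrightarrow> v \<in> W \<Longrightarrow> B u = B v \<Longrightarrow> u < v \<Longrightarrow> \<psi> u < \<psi> v"
    using I2 unfolding of_iso_def by blast+
  have phiW: "\<And>v. v \<in> V \<Longrightarrow> \<phi> v \<in> W" using b1 bij_betwE by blast
  show ?thesis unfolding of_iso_def
  proof (intro conjI ballI impI)
    show "bij_betw (\<psi> \<circ> \<phi>) V X" using bij_betw_trans[OF b1 b2] .
  next
    fix v assume v: "v \<in> V"
    show "C ((\<psi> \<circ> \<phi>) v) = (if A v = 0 then 0 else (\<psi> \<circ> \<phi>) (A v))"
    proof (cases "A v = 0")
      case True
      then show ?thesis using p2[OF phiW[OF v]] p1[OF v] by simp
    next
      case False
      then have Av: "A v \<in> V" using AV v by blast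
      then have "\<phi> (A v) \<noteq> 0" using phiW W0 by metis
      then show ?thesis using p2[OF phiW[OF v]] p1[OF v] False by simp
    qed
  next
    fix u v assume u: "u \<in> V" and v: "v \<in> V" and uv: "A u = A v \<and> u < v"
    have "B (\<phi> u) = B (\<phi> v)" using p1[OF u] p1[OF v] uv by simp
    then show "(\<psi> \<circ> \<phi>) u < (\<psi> \<circ> \<phi>) v" using o2[OF phiW[OF u] phiW[OF v]] o1[OF u v] uv by simp
  qed
qed

lemma marg:
  fixes p :: real and f :: "nat set \<Rightarrow> real"
  assumes V: "finite V" and D: "finite D" and VD: "V \<inter> D = {}"
  shows "(\<Sum>S\<in>Pow (V \<union> D). p ^ card S * (1 - p) ^ (card (V \<union> D) - card S) * f (S \<inter> V)) =
         (\<Sum>T\<in>Pow V. p ^ card T * (1 - p) ^ (card V - card T) * f T)"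
  using D VD
proof (induction D rule: finite_induct)
  case empty
  have "\<And>S. S \<in> Pow V \<Longrightarrow> S \<inter> V = S" by blast
  then show ?case by (intro sum.cong) auto
next
  case (insert x D)
  define U where "U = V \<union> D"
  have U: "finite U" "x \<notin> U" unfolding U_def using V insert by auto
  have VU: "V \<union> insert x D = insert x U" unfolding U_def by auto
  have xV: "x \<notin> V" using insert.prems by auto
  have cU: "card (insert x U) = Suc (card U)" using U by simp
  have inj: "inj_on (insert x) (Pow U)"
  proof (rule inj_onI)
    fix A1 A2 assume a: "A1 \<in> Pow U" "A2 \<in> Pow U" "insert x A1 = insert x A2"
    have "x \<notin> A1" "x \<notin> A2" using a(1,2) U(2) by auto
    then have "A1 = insert x A1 - {x}" "A2 = insert x A2 - {x}" by auto
    then show "A1 = A2" using a(3) by metis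
  qed
  have disj: "Pow U \<inter> insert x ` Pow U = {}" using U by auto
  define g where "g S = p ^ card S * (1 - p) ^ (card (insert x U) - card S) * f (S \<inter> V)" for S
  have "(\<Sum>S\<in>Pow (insert x U). g S) = (\<Sum>S\<in>Pow U. g S) + (\<Sum>S\<in>insert x ` Pow U. g S)"
    unfolding Pow_insert using U disj by (intro sum.union_disjoint) auto
  also have "(\<Sum>S\<in>insert x ` Pow U. g S) = (\<Sum>S\<in>Pow U. g (insert x S))"
    using sum.reindex[OF inj] by simp
  also have "(\<Sum>S\<in>Pow U. g S) + (\<Sum>S\<in>Pow U. g (insert x S)) =
      (\<Sum>S\<in>Pow U. p ^ card S * (1 - p) ^ (card U - card S) * f (S \<inter> V))"
    unfolding sum.distrib[symmetric]
  proof (rule sum.cong)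
    fix S assume S: "S \<in> Pow U"
    then have fS: "finite S" using U finite_subset by auto
    have xS: "x \<notin> S" using S U by auto
    have cS: "card S \<le> card U" using S U card_mono by auto
    have ci: "card (insert x S) = Suc (card S)" using fS xS by simp
    have iV: "insert x S \<inter> V = S \<inter> V" using xV by auto
    have e1: "card (insert x U) - card S = Suc (card U - card S)" using cU cS by simp
    have e2: "card (insert x U) - Suc (card S) = card U - card S" using cU by simp
    show "g S + g (insert x S) = p ^ card S * (1 - p) ^ (card U - card S) * f (S \<inter> V)"
      unfolding g_def ci e1 e2 iV by (simp add: algebra_simps)
  qed simp
  finally show ?case using insert.IH insert.prems VU unfolding U_def g_def by simp
qed



lemma part_b_core:
  fixes p :: real
  assumes Ff: "F \<in> ford (N + d)" and Gf: "G \<in> ford N" and G'f: "G' \<in> ford N"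
    and iso: "of_iso {Suc d..N + d} (induced F {Suc d..N + d}) {1..N} G \<phi>"
  shows "ungar_prob (N + d) p F
           (\<lambda>F'. \<exists>\<phi>. of_iso {Suc d..N + d} (induced F' {Suc d..N + d}) {1..N} G' \<phi>)
         = ungar_prob N p G (\<lambda>H. H = G')"
proof -
  define V where "V = {Suc d..N + d}"
  have BF: "basic (N + d) F" using ford_basic[OF Ff] .
  have RFf: "R d N F \<in> ford N" using R_ford[OF Ff] .
  have RB: "\<And>P. basic (N + d) P \<Longrightarrow> \<forall>v\<in>{1..N}. R d N P v \<noteq> 0 \<longrightarrow> R d N P v \<in> {1..N}"
  proof (intro ballI impI)
    fix P v assume "basic (N + d) P" "v \<in> {1..N}" "R d N P v \<noteq> 0"
    then show "R d N P v \<in> {1..N}" using R_basic[of N d P] unfolding basic_def by fastforce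
  qed
  have V0: "0 \<notin> V" unfolding V_def by simp
  have RF: "R d N F = G"
  proof -
    have "of_iso {1..N} (R d N F) {1..N} G (\<phi> \<circ> (\<lambda>x. x + d))"
      using iso_comp[OF iso_shift1[OF BF] iso V0[unfolded V_def] RB[OF BF]] .
    then show ?thesis using iso_unique[OF RFf Gf] by blast
  qed
  define h where "h T = (\<lambda>x. x - d) ` T" for T :: "nat set"
  have key: "(\<exists>\<phi>. of_iso V (induced (ungar_apply (N + d) S F) V) {1..N} G' \<phi>) \<longleftrightarrow>
             ungar_apply N (h (S \<inter> V)) G = G'" if S: "S \<in> Pow {1..N + d}" for S
  proof -
    define F' where "F' = ungar_apply (N + d) S F"
    have F'f: "F' \<in> ford (N + d)" unfolding F'_def using ungar_ford[OF Ff] .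
    have BF': "basic (N + d) F'" using ford_basic[OF F'f] .
    have finS: "finite S" using S finite_subset by auto
    have SI: "S \<inter> {1..N + d} = S" using S by auto
    have "R d N F' = fold (operate N) (map (\<lambda>x. x - d) (filter (\<lambda>x. d < x) (sorted_list_of_set S))) (R d N F)"
      unfolding F'_def ungar_apply_def
      by (rule R_fold[OF Ff]) (use S finS in auto)
    also have "map (\<lambda>x. x - d) (filter (\<lambda>x. d < x) (sorted_list_of_set S)) = sorted_list_of_set (h (S \<inter> V))"
      using sorted_shift[OF finS, of d "N + d"] SI unfolding h_def V_def by simp
    finally have RF': "R d N F' = ungar_apply N (h (S \<inter> V)) G" unfolding ungar_apply_def RF .
    show ?thesis
    proof
      assume "\<exists>\<phi>. of_iso V (induced (ungar_apply (N + d) S F) V) {1..N} G' \<phi>"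
      then obtain \<psi> where \<psi>: "of_iso V (induced F' V) {1..N} G' \<psi>" unfolding F'_def by blast
      have "of_iso {1..N} (R d N F') {1..N} G' (\<psi> \<circ> (\<lambda>x. x + d))"
        using iso_comp[OF iso_shift1[OF BF'] \<psi>[unfolded V_def] V0[unfolded V_def] RB[OF BF']] .
      then have "R d N F' = G'" using iso_unique[OF R_ford[OF F'f] G'f] by blast
      then show "ungar_apply N (h (S \<inter> V)) G = G'" using RF' by simp
    next
      assume "ungar_apply N (h (S \<inter> V)) G = G'"
      then have "R d N F' = G'" using RF' by simp
      then show "\<exists>\<phi>. of_iso V (induced (ungar_apply (N + d) S F) V) {1..N} G' \<phi>"
        using iso_shift2[OF BF'] unfolding V_def F'_def by metis
    qed
  qed
  define k where "k T = (if ungar_apply N T G = G' then 1 else 0 :: real)" for T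
  have U: "{1..N + d} = V \<union> {1..d}" unfolding V_def by auto
  have cU: "card (V \<union> {1..d}) = N + d" using U[symmetric] by simp
  have "ungar_prob (N + d) p F
           (\<lambda>F'. \<exists>\<phi>. of_iso {Suc d..N + d} (induced F' {Suc d..N + d}) {1..N} G' \<phi>)
        = (\<Sum>S\<in>Pow (V \<union> {1..d}). p ^ card S * (1 - p) ^ (card (V \<union> {1..d}) - card S) * k (h (S \<inter> V)))"
    unfolding ungar_prob_def cU unfolding U[symmetric]
    by (rule sum.cong) (use key in \<open>auto simp: k_def V_def\<close>)
  also have "\<dots> = (\<Sum>T\<in>Pow V. p ^ card T * (1 - p) ^ (card V - card T) * k (h T))"
    by (rule marg) (auto simp: V_def)
  also have "\<dots> = (\<Sum>T\<in>Pow V. p ^ card (h T) * (1 - p) ^ (N - card (h T)) * k (h T))"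
  proof (rule sum.cong)
    fix T assume "T \<in> Pow V"
    then have TV: "T \<subseteq> {Suc d..N + d}" unfolding V_def by blast
    have "inj_on (\<lambda>x. x - d) T"
    proof (rule inj_onI)
      fix x y assume xy: "x \<in> T" "y \<in> T" "x - d = y - d"
      have "d < x" "d < y" using xy(1,2) TV by auto
      then show "x = y" using xy(3) by simp
    qed
    then have "card (h T) = card T" unfolding h_def by (simp add: card_image)
    moreover have "card V = N" unfolding V_def by simp
    ultimately show "p ^ card T * (1 - p) ^ (card V - card T) * k (h T) =
                     p ^ card (h T) * (1 - p) ^ (N - card (h T)) * k (h T)" by simp
  qed simp
  also have "\<dots> = (\<Sum>T\<in>Pow {1..N}. p ^ card T * (1 - p) ^ (N - card T) * k T)"
  proof (rule sum.reindex_bij_betw)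
    show "bij_betw h (Pow V) (Pow {1..N})"
    proof (rule bij_betw_byWitness[where f' = "\<lambda>T. (\<lambda>x. x + d) ` T"])
      show "\<forall>a\<in>Pow V. (\<lambda>x. x + d) ` h a = a"
        unfolding h_def V_def by (auto simp: image_image) (force)
      show "\<forall>a'\<in>Pow {1..N}. h ((\<lambda>x. x + d) ` a') = a'"
        unfolding h_def by (auto simp: image_image)
      show "h ` Pow V \<subseteq> Pow {1..N}"
      proof
        fix T' assume "T' \<in> h ` Pow V"
        then obtain T where T: "T \<subseteq> {Suc d..N + d}" "T' = (\<lambda>x. x - d) ` T" unfolding h_def V_def by blast
        have "\<And>x. x \<in> T \<Longrightarrow> x - d \<in> {1..N}" using T(1) by fastforce
        then show "T' \<in> Pow {1..N}" using T(2) by blast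
      qed
      show "(\<lambda>T. (\<lambda>x. x + d) ` T) ` Pow {1..N} \<subseteq> Pow V" unfolding V_def by auto
    qed
  qed
  also have "\<dots> = ungar_prob N p G (\<lambda>H. H = G')"
    unfolding ungar_prob_def k_def by simp
  finally show ?thesis .
qed

lemma part_b:
  fixes p :: real
  assumes m: "m \<in> {1..n}" and Ff: "F \<in> ford n" and Gf: "G \<in> ford (n - m + 1)"
    and iso: "\<exists>\<phi>. of_iso {m..n} (induced F {m..n}) {1..n - m + 1} G \<phi>"
    and G'f: "G' \<in> ford (n - m + 1)"
  shows "ungar_prob n p F
              (\<lambda>F'. \<exists>\<phi>. of_iso {m..n} (induced F' {m..n}) {1..n - m + 1} G' \<phi>)
            = ungar_prob (n - m + 1) p G (\<lambda>H. H = G')"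
proof -
  define d where "d = m - 1"
  define N where "N = n - m + 1"
  have e1: "n = N + d" and e2: "m = Suc d" using m unfolding N_def d_def by auto
  obtain \<phi> where \<phi>: "of_iso {m..n} (induced F {m..n}) {1..n - m + 1} G \<phi>" using iso by blast
  have Gf2: "G \<in> ford N" and G'f2: "G' \<in> ford N" using Gf G'f unfolding N_def .
  have \<phi>2: "of_iso {Suc d..N + d} (induced F {Suc d..N + d}) {1..N} G \<phi>"
    using \<phi> unfolding N_def[symmetric] unfolding e1 e2 .
  have Ff2: "F \<in> ford (N + d)" using Ff unfolding e1 .
  have core: "ungar_prob (N + d) p F
           (\<lambda>F'. \<exists>\<phi>. of_iso {Suc d..N + d} (induced F' {Suc d..N + d}) {1..N} G' \<phi>)
         = ungar_prob N p G (\<lambda>H. H = G')"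
    by (rule part_b_core[OF Ff2 Gf2 G'f2 \<phi>2])
  show ?thesis unfolding N_def[symmetric] using core unfolding e1 e2 .
qed


theorem proposition4p9:
  shows "(\<forall>n. \<forall>F\<in>ford n. \<forall>v\<in>{1..n}.
            \<exists>b. {u\<in>{1..n}. \<exists>j. (F ^^ j) u = v} = {v..b})
       \<and> (\<forall>n (p::real) m F G G'.
            0 < p \<and> p \<le> 1 \<and> m \<in> {1..n} \<and> F \<in> ford n \<and>
            G \<in> ford (n - m + 1) \<and>
            (\<exists>\<phi>. of_iso {m..n} (induced F {m..n}) {1..n - m + 1} G \<phi>) \<and>
            G' \<in> ford (n - m + 1) \<longrightarrow>
            ungar_prob n p F
              (\<lambda>F'. \<exists>\<phi>. of_iso {m..n} (induced F' {m..n}) {1..n - m + 1} G' \<phi>)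
            = ungar_prob (n - m + 1) p G (\<lambda>H. H = G'))
       \<and> (\<forall>n S k l.
            (\<forall>t\<ge>1. S t \<subseteq> {1..n}) \<and> k \<in> {1..n} \<and> l \<in> {1..n} \<and> k < l \<and>
            (\<forall>i\<in>{k..l}. \<exists>t\<ge>1. i \<in> S t) \<and>
            hit S l < hit S k \<and>
            (\<forall>i\<in>{k+1..l-1}. hit S i \<le> hit S l) \<longrightarrow>
            run n S (hit S l) l = k)"
proof (intro conjI allI ballI impI)
  fix n F v assume "F \<in> ford n" "v \<in> {1..n}"
  then show "\<exists>b. {u\<in>{1..n}. \<exists>j. (F ^^ j) u = v} = {v..b}" by (rule part_a)
next
  fix n m F G G' and p :: real
  assume "0 < p \<and> p \<le> 1 \<and> m \<in> {1..n} \<and> F \<in> ford n \<and>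
            G \<in> ford (n - m + 1) \<and>
            (\<exists>\<phi>. of_iso {m..n} (induced F {m..n}) {1..n - m + 1} G \<phi>) \<and>
            G' \<in> ford (n - m + 1)"
  then show "ungar_prob n p F
              (\<lambda>F'. \<exists>\<phi>. of_iso {m..n} (induced F' {m..n}) {1..n - m + 1} G' \<phi>)
            = ungar_prob (n - m + 1) p G (\<lambda>H. H = G')"
    using part_b by blast
next
  fix n S k l
  assume "(\<forall>t\<ge>1. S t \<subseteq> {1..n}) \<and> k \<in> {1..n} \<and> l \<in> {1..n} \<and> k < l \<and>
            (\<forall>i\<in>{k..l}. \<exists>t\<ge>1. i \<in> S t) \<and>
            hit S l < hit S k \<and>
            (\<forall>i\<in>{k+1..l-1}. hit S i \<le> hit S l)"
  then show "run n S (hit S l) l = k" using part_c by blast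
qed

end
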